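(* Let $G$ be a group with finite generating set $S$ (with $S=S^{-1}$, $e\notin S$). For $n\ge 3$ let $\sigma=(1\,2\,\cdots\,n)\in\mathrm{Sym}(n)$ and $S_{\rm neg}=\{(1\,2),(2\,3),\dots,(n-1\ n),\sigma,\sigma^{-1}\}$. Then for all sufficiently large $n$ there is a map $i\colon G\to G\times\mathrm{Sym}(n)$ which is an isometric embedding for the word metrics of $(G,S)$ and $(G\times\mathrm{Sym}(n),S\boxtimes S_{\rm neg})$, such that $\kappa(i(g))<0$ for all $g\in G$ (curvature with respect to $S\boxtimes S_{\rm neg}$), and such that $d(i(gh),i(g)i(h))\le 1$ for all $g,h\in G$.
   Context: For generating sets $S_1,S_2$ of groups $G_1,G_2$, $S_1\boxtimes S_2=(S_1\times\{e\})\cup(\{e\}\times S_2)$ is the split generating set of $G_1\times G_2$. For a group with finite generating set $S$ ($S=S^{-1}$, $e\notin S$), $|x|$ is word length, $d(x,y)=|x^{-1}y|$, $\mathrm{Av}(g)=\frac{1}{|S|}\sum_{a\in S}|a^{-1}ga|$, and for $g\neq e$ the curvature is $\kappa(g)=\frac{|g|-\mathrm{Av}(g)}{|g|}$. *)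

theory Defs
  imports "HOL-Algebra.Sym_Groups" "HOL-Algebra.Generated_Groups" Complex_Main
begin

definition fin_sym_gen_set :: "('a, 'b) monoid_scheme \<Rightarrow> 'a set \<Rightarrow> bool" where
  "fin_sym_gen_set G S \<longleftrightarrow> finite S \<and> S \<subseteq> carrier G \<and> (\<forall>s\<in>S. inv\<^bsub>G\<^esub> s \<in> S)
     \<and> \<one>\<^bsub>G\<^esub> \<notin> S \<and> generate G S = carrier G"

definition word_length :: "('a, 'b) monoid_scheme \<Rightarrow> 'a set \<Rightarrow> 'a \<Rightarrow> nat" where
  "word_length G S g = (LEAST k. \<exists>ws. length ws = k \<and> set ws \<subseteq> S \<and>
       foldr (\<lambda>x y. x \<otimes>\<^bsub>G\<^esub> y) ws \<one>\<^bsub>G\<^esub> = g)"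

definition word_dist :: "('a, 'b) monoid_scheme \<Rightarrow> 'a set \<Rightarrow> 'a \<Rightarrow> 'a \<Rightarrow> nat" where
  "word_dist G S x y = word_length G S (inv\<^bsub>G\<^esub> x \<otimes>\<^bsub>G\<^esub> y)"

definition word_avg :: "('a, 'b) monoid_scheme \<Rightarrow> 'a set \<Rightarrow> 'a \<Rightarrow> real" where
  "word_avg G S g = (\<Sum>a\<in>S. real (word_length G S (inv\<^bsub>G\<^esub> a \<otimes>\<^bsub>G\<^esub> g \<otimes>\<^bsub>G\<^esub> a))) / real (card S)"

text \<open>Curvature kappa(g) = (|g| - Av(g)) / |g| (meaningful for g not the identity).\<close>
definition curvature :: "('a, 'b) monoid_scheme \<Rightarrow> 'a set \<Rightarrow> 'a \<Rightarrow> real" where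
  "curvature G S g = (real (word_length G S g) - word_avg G S g) / real (word_length G S g)"

definition split_gen :: "('a, 'c) monoid_scheme \<Rightarrow> ('b, 'd) monoid_scheme \<Rightarrow> 'a set \<Rightarrow> 'b set \<Rightarrow> ('a \<times> 'b) set" where
  "split_gen G1 G2 S1 S2 = (S1 \<times> {\<one>\<^bsub>G2\<^esub>}) \<union> ({\<one>\<^bsub>G1\<^esub>} \<times> S2)"

definition ncycle :: "nat \<Rightarrow> nat \<Rightarrow> nat" where
  "ncycle n = (\<lambda>k. if 1 \<le> k \<and> k \<le> n then (if k = n then 1 else k + 1) else k)"

definition ncycle_inv :: "nat \<Rightarrow> nat \<Rightarrow> nat" where
  "ncycle_inv n = (\<lambda>k. if 1 \<le> k \<and> k \<le> n then (if k = 1 then n else k - 1) else k)"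

definition S_neg :: "nat \<Rightarrow> (nat \<Rightarrow> nat) set" where
  "S_neg n = {Transposition.transpose i (i + 1) | i. 1 \<le> i \<and> i < n} \<union> {ncycle n, ncycle_inv n}"

end

theory Submission
  imports Defs
begin


abbreviation fr :: "('a, 'b) monoid_scheme \<Rightarrow> 'a list \<Rightarrow> 'a" where
  "fr G ws \<equiv> foldr (\<lambda>x y. x \<otimes>\<^bsub>G\<^esub> y) ws \<one>\<^bsub>G\<^esub>"

definition hasw :: "('a, 'b) monoid_scheme \<Rightarrow> 'a set \<Rightarrow> 'a \<Rightarrow> bool" where
  "hasw G S g \<longleftrightarrow> (\<exists>ws. set ws \<subseteq> S \<and> fr G ws = g)"

lemma fr_closed: "monoid G \<Longrightarrow> set ws \<subseteq> carrier G \<Longrightarrow> fr G ws \<in> carrier G"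
  by (induction ws) (auto simp: monoid.m_closed monoid.one_closed)

lemma fr_append: "monoid G \<Longrightarrow> set xs \<subseteq> carrier G \<Longrightarrow> set ys \<subseteq> carrier G \<Longrightarrow>
   fr G (xs @ ys) = fr G xs \<otimes>\<^bsub>G\<^esub> fr G ys"
  by (induction xs) (auto simp: fr_closed monoid.l_one monoid.m_assoc)

lemma wl_le: "set ws \<subseteq> S \<Longrightarrow> fr G ws = g \<Longrightarrow> word_length G S g \<le> length ws"
  unfolding word_length_def by (rule Least_le) blast

lemma wl_ex: "hasw G S g \<Longrightarrow> \<exists>ws. length ws = word_length G S g \<and> set ws \<subseteq> S \<and> fr G ws = g"
  unfolding word_length_def hasw_def by (rule LeastI_ex) blast

lemma wl_one: "word_length G S \<one>\<^bsub>G\<^esub> = 0"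
  using wl_le[of "[]" S G] by simp

lemma wl_pos: assumes "hasw G S g" "g \<noteq> \<one>\<^bsub>G\<^esub>" shows "1 \<le> word_length G S g"
proof -
  obtain ws where "length ws = word_length G S g" "fr G ws = g" using wl_ex[OF assms(1)] by blast
  thus ?thesis using assms(2) by (cases ws) auto
qed

lemma wl_ge2: assumes "monoid G" "S \<subseteq> carrier G" "hasw G S g" "g \<noteq> \<one>\<^bsub>G\<^esub>" "g \<notin> S"
  shows "2 \<le> word_length G S g"
proof -
  obtain ws where w: "length ws = word_length G S g" "set ws \<subseteq> S" "fr G ws = g" using wl_ex[OF assms(3)] by blast
  show ?thesis
  proof (cases ws)
    case Nil thus ?thesis using w assms by auto
  next
    case (Cons a l)
    show ?thesis
    proof (cases l)
      case Nil
      have aS: "a \<in> S" using w Cons by simp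
      hence "a \<in> carrier G" using assms by auto
      hence "g = a" using w Cons Nil monoid.r_one[OF assms(1)] by simp
      thus ?thesis using aS assms by simp
    next
      case (Cons b l') thus ?thesis using w \<open>ws = a # l\<close> by simp
    qed
  qed
qed

lemma wl_le1: "s \<in> S \<Longrightarrow> monoid G \<Longrightarrow> S \<subseteq> carrier G \<Longrightarrow> word_length G S s \<le> 1"
  using wl_le[of "[s]" S G s] by (auto simp: monoid.r_one subsetD)

lemma hasw_gen: assumes "s \<in> S" "monoid G" "S \<subseteq> carrier G" shows "hasw G S s"
  unfolding hasw_def using assms by (intro exI[of _ "[s]"]) (auto simp: monoid.r_one subsetD)

lemma hasw_all: assumes "group G" "fin_sym_gen_set G S" "g \<in> carrier G" shows "hasw G S g"
proof -
  have S: "S \<subseteq> carrier G" "\<And>s. s\<in>S \<Longrightarrow> inv\<^bsub>G\<^esub> s \<in> S" "generate G S = carrier G"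
    using assms(2) unfolding fin_sym_gen_set_def by auto
  have m: "monoid G" using assms(1) group.is_monoid by blast
  have "g \<in> generate G S" using S assms by auto
  thus ?thesis
  proof (induction rule: generate.induct)
    case one thus ?case unfolding hasw_def by (intro exI[of _ "[]"]) auto
  next
    case (incl h) show ?case by (rule hasw_gen[OF incl m S(1)])
  next
    case (inv h) show ?case by (rule hasw_gen[OF S(2)[OF inv] m S(1)])
  next
    case (eng h1 h2)
    then obtain w1 w2 where w: "set w1 \<subseteq> S" "fr G w1 = h1" "set w2 \<subseteq> S" "fr G w2 = h2"
      unfolding hasw_def by blast
    have "fr G (w1 @ w2) = h1 \<otimes>\<^bsub>G\<^esub> h2"
      using fr_append[OF m, of w1 w2] w S(1) by (simp del: foldr_append)
    moreover have "set (w1 @ w2) \<subseteq> S" using w by simp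
    ultimately show ?case unfolding hasw_def by blast
  qed
qed

lemma wl_conj: assumes "group G" "S \<subseteq> carrier G" "s \<in> S" "inv\<^bsub>G\<^esub> s \<in> S" "x \<in> carrier G"
  "hasw G S (inv\<^bsub>G\<^esub> s \<otimes>\<^bsub>G\<^esub> x \<otimes>\<^bsub>G\<^esub> s)"
  shows "word_length G S x \<le> word_length G S (inv\<^bsub>G\<^esub> s \<otimes>\<^bsub>G\<^esub> x \<otimes>\<^bsub>G\<^esub> s) + 2"
proof -
  interpret group G by fact
  let ?y = "inv\<^bsub>G\<^esub> s \<otimes>\<^bsub>G\<^esub> x \<otimes>\<^bsub>G\<^esub> s"
  obtain w where w: "length w = word_length G S ?y" "set w \<subseteq> S" "fr G w = ?y"
    using wl_ex[OF assms(6)] by blast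
  have sc: "s \<in> carrier G" using assms by auto
  have wc: "set w \<subseteq> carrier G" using w assms by auto
  have "fr G (w @ [inv\<^bsub>G\<^esub> s]) = fr G w \<otimes>\<^bsub>G\<^esub> fr G [inv\<^bsub>G\<^esub> s]"
    by (rule fr_append[OF is_monoid wc]) (use sc in simp)
  hence "fr G ([s] @ w @ [inv\<^bsub>G\<^esub> s]) = s \<otimes>\<^bsub>G\<^esub> (?y \<otimes>\<^bsub>G\<^esub> inv\<^bsub>G\<^esub> s)"
    using w sc by (simp del: foldr_append)
  also have "\<dots> = s \<otimes>\<^bsub>G\<^esub> (inv\<^bsub>G\<^esub> s \<otimes>\<^bsub>G\<^esub> x)" using sc assms(5) by (simp add: m_assoc)
  also have "\<dots> = x" using sc assms(5) by (simp add: m_assoc[symmetric])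
  finally have "word_length G S x \<le> length ([s] @ w @ [inv\<^bsub>G\<^esub> s])"
    using w assms by (intro wl_le) auto
  thus ?thesis using w by simp
qed


lemma sg_mem:
  assumes "set ws \<subseteq> split_gen G H S S2" "q \<in> set ws" "\<one>\<^bsub>G\<^esub> \<notin> S"
  shows "(fst q \<noteq> \<one>\<^bsub>G\<^esub> \<longrightarrow> fst q \<in> S \<and> snd q = \<one>\<^bsub>H\<^esub>) \<and> (fst q = \<one>\<^bsub>G\<^esub> \<longrightarrow> snd q \<in> S2)"
  using assms unfolding split_gen_def by auto

lemma fr_proj:
  assumes "monoid G" "monoid H" "S \<subseteq> carrier G" "S2 \<subseteq> carrier H" "\<one>\<^bsub>G\<^esub> \<notin> S"
    "set ws \<subseteq> split_gen G H S S2"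
  shows "fst (fr (G \<times>\<times> H) ws) = fr G (map fst (filter (\<lambda>p. fst p \<noteq> \<one>\<^bsub>G\<^esub>) ws))
       \<and> snd (fr (G \<times>\<times> H) ws) = fr H (map snd (filter (\<lambda>p. fst p = \<one>\<^bsub>G\<^esub>) ws))"
  using assms(6)
proof (induction ws)
  case Nil thus ?case by simp
next
  case (Cons p ws)
  have IH: "fst (fr (G \<times>\<times> H) ws) = fr G (map fst (filter (\<lambda>p. fst p \<noteq> \<one>\<^bsub>G\<^esub>) ws))"
    "snd (fr (G \<times>\<times> H) ws) = fr H (map snd (filter (\<lambda>p. fst p = \<one>\<^bsub>G\<^esub>) ws))"
    using Cons.IH Cons.prems by auto
  have c1: "set (map fst (filter (\<lambda>p. fst p \<noteq> \<one>\<^bsub>G\<^esub>) ws)) \<subseteq> carrier G"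
  proof
    fix x assume "x \<in> set (map fst (filter (\<lambda>p. fst p \<noteq> \<one>\<^bsub>G\<^esub>) ws))"
    then obtain q where q: "q \<in> set ws" "fst q \<noteq> \<one>\<^bsub>G\<^esub>" "x = fst q" by auto
    hence "q \<in> set (p # ws)" by simp
    from sg_mem[OF Cons.prems(1) this assms(5)] q have "x \<in> S" by simp
    thus "x \<in> carrier G" using assms(3) by blast
  qed
  have c2: "set (map snd (filter (\<lambda>p. fst p = \<one>\<^bsub>G\<^esub>) ws)) \<subseteq> carrier H"
  proof
    fix x assume "x \<in> set (map snd (filter (\<lambda>p. fst p = \<one>\<^bsub>G\<^esub>) ws))"
    then obtain q where q: "q \<in> set ws" "fst q = \<one>\<^bsub>G\<^esub>" "x = snd q" by auto
    hence "q \<in> set (p # ws)" by simp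
    from sg_mem[OF Cons.prems(1) this assms(5)] q have "x \<in> S2" by simp
    thus "x \<in> carrier H" using assms(4) by blast
  qed
  have f1: "fr G (map fst (filter (\<lambda>p. fst p \<noteq> \<one>\<^bsub>G\<^esub>) ws)) \<in> carrier G"
    using fr_closed[OF assms(1) c1] .
  have f2: "fr H (map snd (filter (\<lambda>p. fst p = \<one>\<^bsub>G\<^esub>) ws)) \<in> carrier H"
    using fr_closed[OF assms(2) c2] .
  have "p \<in> split_gen G H S S2" using Cons.prems by auto
  then consider s where "s \<in> S" "p = (s, \<one>\<^bsub>H\<^esub>)" | t where "t \<in> S2" "p = (\<one>\<^bsub>G\<^esub>, t)"
    unfolding split_gen_def by auto
  thus ?case
  proof cases
    case 1
    have s1: "s \<noteq> \<one>\<^bsub>G\<^esub>" using 1 assms(5) by auto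
    have "fr (G \<times>\<times> H) (p # ws) = p \<otimes>\<^bsub>G \<times>\<times> H\<^esub> fr (G \<times>\<times> H) ws" by simp
    also have "\<dots> = (s \<otimes>\<^bsub>G\<^esub> fst (fr (G \<times>\<times> H) ws), \<one>\<^bsub>H\<^esub> \<otimes>\<^bsub>H\<^esub> snd (fr (G \<times>\<times> H) ws))"
      using 1 by (cases "fr (G \<times>\<times> H) ws") simp
    also have "\<dots> = (s \<otimes>\<^bsub>G\<^esub> fst (fr (G \<times>\<times> H) ws), snd (fr (G \<times>\<times> H) ws))"
      using IH(2) monoid.l_one[OF assms(2) f2] by simp
    finally have e: "fr (G \<times>\<times> H) (p # ws) = (s \<otimes>\<^bsub>G\<^esub> fst (fr (G \<times>\<times> H) ws), snd (fr (G \<times>\<times> H) ws))" .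
    have fl1: "map fst (filter (\<lambda>p. fst p \<noteq> \<one>\<^bsub>G\<^esub>) (p # ws)) = s # map fst (filter (\<lambda>p. fst p \<noteq> \<one>\<^bsub>G\<^esub>) ws)" using 1 s1 by simp
    have fl2: "filter (\<lambda>p. fst p = \<one>\<^bsub>G\<^esub>) (p # ws) = filter (\<lambda>p. fst p = \<one>\<^bsub>G\<^esub>) ws" using 1 s1 by simp
    show ?thesis unfolding e fl1 fl2 using IH by simp
  next
    case 2
    have "fr (G \<times>\<times> H) (p # ws) = p \<otimes>\<^bsub>G \<times>\<times> H\<^esub> fr (G \<times>\<times> H) ws" by simp
    also have "\<dots> = (\<one>\<^bsub>G\<^esub> \<otimes>\<^bsub>G\<^esub> fst (fr (G \<times>\<times> H) ws), t \<otimes>\<^bsub>H\<^esub> snd (fr (G \<times>\<times> H) ws))"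
      using 2 by (cases "fr (G \<times>\<times> H) ws") simp
    also have "\<dots> = (fst (fr (G \<times>\<times> H) ws), t \<otimes>\<^bsub>H\<^esub> snd (fr (G \<times>\<times> H) ws))"
      using IH(1) monoid.l_one[OF assms(1) f1] by simp
    finally have e: "fr (G \<times>\<times> H) (p # ws) = (fst (fr (G \<times>\<times> H) ws), t \<otimes>\<^bsub>H\<^esub> snd (fr (G \<times>\<times> H) ws))" .
    have fl1: "filter (\<lambda>p. fst p \<noteq> \<one>\<^bsub>G\<^esub>) (p # ws) = filter (\<lambda>p. fst p \<noteq> \<one>\<^bsub>G\<^esub>) ws" using 2 by simp
    have fl2: "map snd (filter (\<lambda>p. fst p = \<one>\<^bsub>G\<^esub>) (p # ws)) = t # map snd (filter (\<lambda>p. fst p = \<one>\<^bsub>G\<^esub>) ws)" using 2 by simp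
    show ?thesis unfolding e fl1 fl2 using IH by simp
  qed
qed

lemma wl_prod:
  assumes "monoid G" "monoid H" "S \<subseteq> carrier G" "S2 \<subseteq> carrier H" "\<one>\<^bsub>G\<^esub> \<notin> S"
    "hasw G S a" "hasw H S2 b"
  shows "word_length (G \<times>\<times> H) (split_gen G H S S2) (a, b) = word_length G S a + word_length H S2 b"
proof -
  let ?T = "split_gen G H S S2"
  let ?P = "G \<times>\<times> H"
  obtain wa where wa: "length wa = word_length G S a" "set wa \<subseteq> S" "fr G wa = a"
    using wl_ex[OF assms(6)] by blast
  obtain wb where wb: "length wb = word_length H S2 b" "set wb \<subseteq> S2" "fr H wb = b"
    using wl_ex[OF assms(7)] by blast
  define ws where "ws = map (\<lambda>s. (s, \<one>\<^bsub>H\<^esub>)) wa @ map (\<lambda>t. (\<one>\<^bsub>G\<^esub>, t)) wb"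
  have wsT: "set ws \<subseteq> ?T" using wa(2) wb(2) unfolding ws_def split_gen_def by fastforce
  have fw: "filter (\<lambda>x. x \<noteq> \<one>\<^bsub>G\<^esub>) wa = wa" using wa(2) assms(5) by (auto intro!: filter_True)
  have fw2: "filter (\<lambda>x. x = \<one>\<^bsub>G\<^esub>) wa = []" using wa(2) assms(5) by (auto simp: filter_empty_conv)
  have e1: "filter (\<lambda>p. fst p \<noteq> \<one>\<^bsub>G\<^esub>) ws = map (\<lambda>s. (s, \<one>\<^bsub>H\<^esub>)) wa"
    unfolding ws_def using fw by (simp add: filter_map o_def)
  have e2: "filter (\<lambda>p. fst p = \<one>\<^bsub>G\<^esub>) ws = map (\<lambda>t. (\<one>\<^bsub>G\<^esub>, t)) wb"
    unfolding ws_def using fw2 by (simp add: filter_map o_def)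
  have "fst (fr ?P ws) = a" using fr_proj[OF assms(1-5) wsT] e1 wa by (simp add: o_def)
  moreover have "snd (fr ?P ws) = b" using fr_proj[OF assms(1-5) wsT] e2 wb by (simp add: o_def)
  ultimately have frws: "fr ?P ws = (a, b)" by (simp add: prod_eq_iff)
  hence le1: "word_length ?P ?T (a, b) \<le> length ws" using wl_le[OF wsT] by blast
  have hw: "hasw ?P ?T (a, b)" unfolding hasw_def using wsT frws by blast
  obtain w where w: "length w = word_length ?P ?T (a, b)" "set w \<subseteq> ?T" "fr ?P w = (a, b)"
    using wl_ex[OF hw] by blast
  note pr = fr_proj[OF assms(1-5) w(2)]
  let ?w1 = "map fst (filter (\<lambda>p. fst p \<noteq> \<one>\<^bsub>G\<^esub>) w)"
  let ?w2 = "map snd (filter (\<lambda>p. fst p = \<one>\<^bsub>G\<^esub>) w)"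
  have s1: "set ?w1 \<subseteq> S"
  proof
    fix x assume "x \<in> set ?w1"
    then obtain q where q: "q \<in> set w" "fst q \<noteq> \<one>\<^bsub>G\<^esub>" "x = fst q" by auto
    from sg_mem[OF w(2) q(1) assms(5)] q show "x \<in> S" by simp
  qed
  have s2: "set ?w2 \<subseteq> S2"
  proof
    fix x assume "x \<in> set ?w2"
    then obtain q where q: "q \<in> set w" "fst q = \<one>\<^bsub>G\<^esub>" "x = snd q" by auto
    from sg_mem[OF w(2) q(1) assms(5)] q show "x \<in> S2" by simp
  qed
  have l1: "word_length G S a \<le> length ?w1" using wl_le[OF s1] pr w(3) by simp
  have l2: "word_length H S2 b \<le> length ?w2" using wl_le[OF s2] pr w(3) by simp
  have "length ?w1 + length ?w2 = length w"
    using sum_length_filter_compl[of "\<lambda>p. fst p = \<one>\<^bsub>G\<^esub>" w] by simp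
  moreover have "length ws = word_length G S a + word_length H S2 b"
    unfolding ws_def using wa(1) wb(1) by simp
  ultimately show ?thesis using l1 l2 le1 w(1) by linarith
qed



lemma ncycle_comp1: "ncycle n \<circ> ncycle_inv n = id"
  by (rule ext) (auto simp: ncycle_def ncycle_inv_def)

lemma ncycle_comp2: "ncycle_inv n \<circ> ncycle n = id"
  by (rule ext) (auto simp: ncycle_def ncycle_inv_def)

lemma perm_of_inverse:
  assumes "f \<circ> g = id" "g \<circ> f = id" "\<And>x. x \<notin> A \<Longrightarrow> f x = x" shows "f permutes A"
proof -
  have "bij f" by (rule o_bij[OF assms(2) assms(1)])
  hence "\<forall>y. \<exists>!x. f x = y" by (simp add: bij_iff)
  thus ?thesis using assms(3) unfolding permutes_def by blast
qed

lemma ncycle_perm: "ncycle n permutes {1..n}"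
  by (rule perm_of_inverse[OF ncycle_comp1 ncycle_comp2]) (auto simp: ncycle_def)

lemma ncycle_inv_perm: "ncycle_inv n permutes {1..n}"
  by (rule perm_of_inverse[OF ncycle_comp2 ncycle_comp1]) (auto simp: ncycle_inv_def)

lemma inv_ncycle: "inv' (ncycle n) = ncycle_inv n"
  by (rule inv_unique_comp[OF ncycle_comp1 ncycle_comp2])

lemma inv_ncycle_inv: "inv' (ncycle_inv n) = ncycle n"
  by (rule inv_unique_comp[OF ncycle_comp2 ncycle_comp1])

lemma inv_transp: "inv' (Transposition.transpose a b) = Transposition.transpose a b"
  by (rule inv_unique_comp) simp_all

lemma S_neg_alt: "S_neg n = (\<lambda>i. Transposition.transpose i (i + 1)) ` {1..<n} \<union> {ncycle n, ncycle_inv n}"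
  unfolding S_neg_def by auto

lemma S_neg_carrier: "S_neg n \<subseteq> carrier (sym_group n)"
  unfolding S_neg_alt sym_group_carrier using ncycle_perm ncycle_inv_perm
  by (auto intro!: permutes_swap_id simp: sym_group_carrier)

lemma ncycle_ne_id: "2 \<le> n \<Longrightarrow> ncycle n \<noteq> id"
proof
  assume "2 \<le> n" "ncycle n = id"
  hence "ncycle n 1 = 1" by simp
  thus False using \<open>2 \<le> n\<close> by (simp add: ncycle_def)
qed

lemma ncycle_inv_ne_id: "2 \<le> n \<Longrightarrow> ncycle_inv n \<noteq> id"
proof
  assume "2 \<le> n" "ncycle_inv n = id"
  hence "ncycle_inv n 1 = 1" by simp
  thus False using \<open>2 \<le> n\<close> by (simp add: ncycle_inv_def)
qed

lemma id_notin_S_neg: assumes "2 \<le> n" shows "id \<notin> S_neg n"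
proof
  assume "id \<in> S_neg n"
  hence "id \<in> (\<lambda>i. Transposition.transpose i (i + 1)) ` {1..<n} \<or> id = ncycle n \<or> id = ncycle_inv n"
    unfolding S_neg_alt by blast
  moreover have ne: "\<And>j::nat. Transposition.transpose j (j + 1) \<noteq> id"
    by (simp only: transpose_eq_id_iff)
  have "id \<notin> (\<lambda>i. Transposition.transpose i (i + 1)) ` {1..<n}"
  proof (rule notI)
    assume "id \<in> (\<lambda>i. Transposition.transpose i (i + 1)) ` {1..<n}"
    then obtain j :: nat where j: "id = Transposition.transpose j (j + 1)" by (rule imageE)
    show False using ne[of j] j by simp
  qed
  ultimately show False using ncycle_ne_id[OF assms] ncycle_inv_ne_id[OF assms] by auto
qed

lemma finite_S_neg: "finite (S_neg n)"
  unfolding S_neg_alt by simp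

lemma S_neg_inv: "t \<in> S_neg n \<Longrightarrow> inv\<^bsub>sym_group n\<^esub> t \<in> S_neg n"
  using S_neg_carrier[of n] unfolding S_neg_alt
  by (auto simp: inv_transp inv_ncycle inv_ncycle_inv subset_iff)

lemma card_transp: "card ((\<lambda>i. Transposition.transpose i (i + 1)) ` {1..<n}) = n - 1"
proof -
  have "inj_on (\<lambda>i::nat. Transposition.transpose i (i + 1)) {1..<n}"
  proof (rule inj_onI)
    fix i j :: nat assume "Transposition.transpose i (i + 1) = Transposition.transpose j (j + 1)"
    hence "Transposition.transpose i (i + 1) i = Transposition.transpose j (j + 1) i" by simp
    thus "i = j" by (auto simp: transpose_def split: if_splits)
  qed
  thus ?thesis by (simp add: card_image)
qed

lemma key_conj:
  assumes "1 \<le> i" "i < n" "4 \<le> n"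
  shows "Transposition.transpose i (i + 1) \<circ> ncycle n \<circ> Transposition.transpose i (i + 1) \<notin> S_neg n"
proof
  let ?t = "Transposition.transpose i (i + 1)"
  let ?f = "?t \<circ> ncycle n \<circ> ?t"
  have f1: "?f (i + 1) = i" using assms by (simp add: ncycle_def transpose_def)
  have f2: "?f i = (if i + 1 < n then i + 2 else 1)" using assms by (auto simp: ncycle_def transpose_def)
  assume "?f \<in> S_neg n"
  hence D: "?f \<in> (\<lambda>i. Transposition.transpose i (i + 1)) ` {1..<n} \<or> ?f = ncycle n \<or> ?f = ncycle_inv n"
    unfolding S_neg_alt by blast
  moreover have False if h: "?f \<in> (\<lambda>i. Transposition.transpose i (i + 1)) ` {1..<n}"
  proof -
    obtain j :: nat where hj: "?f = Transposition.transpose j (j + 1)" using h by (rule imageE)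
    have "Transposition.transpose j (j + 1) (i + 1) = i" using f1 unfolding hj by assumption
    hence "j = i" unfolding transpose_def by (cases "i + 1 = j"; cases "i = j"; simp)
    have "?f i = Transposition.transpose j (j + 1) i" unfolding hj by (rule refl)
    hence "?f i = i + 1" using \<open>j = i\<close> by simp
    thus False using f2 assms by (cases "i + 1 < n"; simp)
  qed
  moreover have False if h: "?f = ncycle n"
  proof -
    have "ncycle n (i + 1) = i" using f1 unfolding h by assumption
    thus False using assms unfolding ncycle_def by (cases "i + 1 = n"; simp)
  qed
  moreover have False if h: "?f = ncycle_inv n"
  proof -
    have "ncycle_inv n i = (if i + 1 < n then i + 2 else 1)" using f2 unfolding h by assumption
    thus False using assms unfolding ncycle_inv_def by (cases "i = 1"; cases "i + 1 < n"; simp)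
  qed
  ultimately show False by blast
qed



lemma split_gen_eq: "split_gen G H S S2 = (\<lambda>s. (s, \<one>\<^bsub>H\<^esub>)) ` S \<union> (\<lambda>t. (\<one>\<^bsub>G\<^esub>, t)) ` S2"
  unfolding split_gen_def by auto

lemma sum_split_gen:
  assumes "finite S" "finite S2" "\<one>\<^bsub>G\<^esub> \<notin> S"
  shows "sum f (split_gen G H S S2) = (\<Sum>s\<in>S. f (s, \<one>\<^bsub>H\<^esub>)) + (\<Sum>t\<in>S2. f (\<one>\<^bsub>G\<^esub>, t))"
    and "card (split_gen G H S S2) = card S + card S2"
proof -
  have d: "(\<lambda>s. (s, \<one>\<^bsub>H\<^esub>)) ` S \<inter> (\<lambda>t. (\<one>\<^bsub>G\<^esub>, t)) ` S2 = {}" using assms(3) by auto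
  have i1: "inj_on (\<lambda>s. (s, \<one>\<^bsub>H\<^esub>)) S" by (rule inj_onI) simp
  have i2: "inj_on (\<lambda>t. (\<one>\<^bsub>G\<^esub>, t)) S2" by (rule inj_onI) simp
  show "sum f (split_gen G H S S2) = (\<Sum>s\<in>S. f (s, \<one>\<^bsub>H\<^esub>)) + (\<Sum>t\<in>S2. f (\<one>\<^bsub>G\<^esub>, t))"
    unfolding split_gen_eq using assms d
    by (simp add: sum.union_disjoint sum.reindex[OF i1] sum.reindex[OF i2] o_def)
  show "card (split_gen G H S S2) = card S + card S2"
    unfolding split_gen_eq using assms d
    by (simp add: card_Un_disjoint card_image[OF i1] card_image[OF i2])
qed

lemma grp_conj_ne:
  assumes "group G" "t \<in> carrier G" "x \<in> carrier G" "x \<noteq> \<one>\<^bsub>G\<^esub>"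
  shows "inv\<^bsub>G\<^esub> t \<otimes>\<^bsub>G\<^esub> x \<otimes>\<^bsub>G\<^esub> t \<noteq> \<one>\<^bsub>G\<^esub>"
proof
  interpret group G by fact
  assume h: "inv\<^bsub>G\<^esub> t \<otimes>\<^bsub>G\<^esub> x \<otimes>\<^bsub>G\<^esub> t = \<one>\<^bsub>G\<^esub>"
  have "x = t \<otimes>\<^bsub>G\<^esub> (inv\<^bsub>G\<^esub> t \<otimes>\<^bsub>G\<^esub> x \<otimes>\<^bsub>G\<^esub> t) \<otimes>\<^bsub>G\<^esub> inv\<^bsub>G\<^esub> t"
  proof -
    have "t \<otimes>\<^bsub>G\<^esub> (inv\<^bsub>G\<^esub> t \<otimes>\<^bsub>G\<^esub> x \<otimes>\<^bsub>G\<^esub> t) \<otimes>\<^bsub>G\<^esub> inv\<^bsub>G\<^esub> t = t \<otimes>\<^bsub>G\<^esub> (inv\<^bsub>G\<^esub> t \<otimes>\<^bsub>G\<^esub> x)"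
      using assms(2,3) by (simp add: m_assoc)
    also have "\<dots> = x" using assms(2,3) by (simp add: m_assoc[symmetric])
    finally show ?thesis by simp
  qed
  also have "\<dots> = \<one>\<^bsub>G\<^esub>" unfolding h using assms(2) by simp
  finally show False using assms(4) by simp
qed

lemma hasw_conj:
  assumes "monoid G" "S \<subseteq> carrier G" "a \<in> S" "b \<in> S" "c \<in> S"
  shows "hasw G S (a \<otimes>\<^bsub>G\<^esub> b \<otimes>\<^bsub>G\<^esub> c)"
proof -
  have c: "a \<in> carrier G" "b \<in> carrier G" "c \<in> carrier G" using assms by auto
  have "fr G [a, b, c] = a \<otimes>\<^bsub>G\<^esub> b \<otimes>\<^bsub>G\<^esub> c"
    using c by (simp add: monoid.r_one[OF assms(1)] monoid.m_assoc[OF assms(1)])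
  thus ?thesis unfolding hasw_def using assms(3-5) by (intro exI[of _ "[a, b, c]"]) simp
qed

theorem mainTheorem11:
  fixes G :: "('a, 'b) monoid_scheme" and S :: "'a set"
  assumes "group G" and "fin_sym_gen_set G S"
  shows "\<exists>N::nat. \<forall>n\<ge>N. 3 \<le> n \<longrightarrow>
    (let P = G \<times>\<times> sym_group n; T = split_gen G (sym_group n) S (S_neg n) in
     \<exists>i. i ` carrier G \<subseteq> carrier P
       \<and> (\<forall>g\<in>carrier G. \<forall>h\<in>carrier G. word_dist P T (i g) (i h) = word_dist G S g h)
       \<and> (\<forall>g\<in>carrier G. i g \<noteq> \<one>\<^bsub>P\<^esub> \<and> curvature P T (i g) < 0)
       \<and> (\<forall>g\<in>carrier G. \<forall>h\<in>carrier G.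
            word_dist P T (i (g \<otimes>\<^bsub>G\<^esub> h)) (i g \<otimes>\<^bsub>P\<^esub> i h) \<le> 1))"
proof (intro exI[of _ "2 * card S + 4"] allI impI)
  fix n :: nat assume nN: "2 * card S + 4 \<le> n" and "3 \<le> n"
  interpret G: group G by fact
  have finS: "finite S" and SG: "S \<subseteq> carrier G" and Sinv: "\<And>s. s \<in> S \<Longrightarrow> inv\<^bsub>G\<^esub> s \<in> S"
    and oneS: "\<one>\<^bsub>G\<^esub> \<notin> S"
    using assms(2) unfolding fin_sym_gen_set_def by auto
  define Sy where "Sy = sym_group n"
  define P where "P = G \<times>\<times> Sy"
  define T where "T = split_gen G Sy S (S_neg n)"
  define \<sigma> where "\<sigma> = ncycle n"
  have gSy: "group Sy" unfolding Sy_def by (rule sym_group_is_group)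
  interpret Sy: group Sy by (rule gSy)
  have gP: "group P" unfolding P_def by (rule DirProd_group[OF assms(1) gSy])
  interpret P: group P by (rule gP)
  have mG: "monoid G" by (rule G.is_monoid)
  have mSy: "monoid Sy" by (rule Sy.is_monoid)
  have SnC: "S_neg n \<subseteq> carrier Sy" unfolding Sy_def by (rule S_neg_carrier)
  have oneSy: "\<one>\<^bsub>Sy\<^esub> = id" unfolding Sy_def by (rule sym_group_one)
  have n2: "2 \<le> n" using nN by simp
  have n4: "4 \<le> n" using nN by simp
  have sigS: "\<sigma> \<in> S_neg n" unfolding \<sigma>_def S_neg_def by simp
  have sigC: "\<sigma> \<in> carrier Sy" using sigS SnC by blast
  have sig1: "\<sigma> \<noteq> \<one>\<^bsub>Sy\<^esub>" unfolding oneSy \<sigma>_def by (rule ncycle_ne_id[OF n2])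
  have idS: "\<one>\<^bsub>Sy\<^esub> \<notin> S_neg n" unfolding oneSy by (rule id_notin_S_neg[OF n2])
  have hsig: "hasw Sy (S_neg n) \<sigma>" by (rule hasw_gen[OF sigS mSy SnC])
  have lsig: "word_length Sy (S_neg n) \<sigma> = 1"
    using wl_le1[OF sigS mSy SnC] wl_pos[OF hsig sig1] by linarith
  have hone: "hasw Sy (S_neg n) \<one>\<^bsub>Sy\<^esub>" unfolding hasw_def by (intro exI[of _ "[]"]) simp
  have lone: "word_length Sy (S_neg n) \<one>\<^bsub>Sy\<^esub> = 0" by (rule wl_one)
  have hG: "\<And>g. g \<in> carrier G \<Longrightarrow> hasw G S g" by (rule hasw_all[OF assms])
  have WP: "\<And>a b. a \<in> carrier G \<Longrightarrow> hasw Sy (S_neg n) b \<Longrightarrow>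
      word_length P T (a, b) = word_length G S a + word_length Sy (S_neg n) b"
    unfolding P_def T_def using wl_prod[OF mG mSy SG SnC oneS] hG by blast
  define i where "i = (\<lambda>g::'a. (g, \<sigma>))"
  have invP: "\<And>a b. a \<in> carrier G \<Longrightarrow> b \<in> carrier Sy \<Longrightarrow> inv\<^bsub>P\<^esub> (a, b) = (inv\<^bsub>G\<^esub> a, inv\<^bsub>Sy\<^esub> b)"
    unfolding P_def by (rule inv_DirProd[OF assms(1) gSy])
  have multP: "\<And>a b c d. (a, b) \<otimes>\<^bsub>P\<^esub> (c, d) = (a \<otimes>\<^bsub>G\<^esub> c, b \<otimes>\<^bsub>Sy\<^esub> d)"
    unfolding P_def by (rule mult_DirProd)
  have oneP: "\<one>\<^bsub>P\<^esub> = (\<one>\<^bsub>G\<^esub>, \<one>\<^bsub>Sy\<^esub>)" unfolding P_def by (rule one_DirProd)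
  have carrP: "carrier P = carrier G \<times> carrier Sy" unfolding P_def by (rule carrier_DirProd)
  have p1: "i ` carrier G \<subseteq> carrier P" unfolding i_def carrP using sigC by auto
  have p2: "word_dist P T (i g) (i h) = word_dist G S g h" if g: "g \<in> carrier G" and h: "h \<in> carrier G" for g h
  proof -
    have "inv\<^bsub>P\<^esub> (i g) \<otimes>\<^bsub>P\<^esub> i h = (inv\<^bsub>G\<^esub> g \<otimes>\<^bsub>G\<^esub> h, inv\<^bsub>Sy\<^esub> \<sigma> \<otimes>\<^bsub>Sy\<^esub> \<sigma>)"
      unfolding i_def using invP[OF g sigC] multP by simp
    also have "\<dots> = (inv\<^bsub>G\<^esub> g \<otimes>\<^bsub>G\<^esub> h, \<one>\<^bsub>Sy\<^esub>)" using sigC by simp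
    finally have e: "inv\<^bsub>P\<^esub> (i g) \<otimes>\<^bsub>P\<^esub> i h = (inv\<^bsub>G\<^esub> g \<otimes>\<^bsub>G\<^esub> h, \<one>\<^bsub>Sy\<^esub>)" .
    have "inv\<^bsub>G\<^esub> g \<otimes>\<^bsub>G\<^esub> h \<in> carrier G" using g h by simp
    thus ?thesis unfolding word_dist_def e using WP[OF _ hone] lone by simp
  qed
  have p4: "word_dist P T (i (g \<otimes>\<^bsub>G\<^esub> h)) (i g \<otimes>\<^bsub>P\<^esub> i h) \<le> 1" if g: "g \<in> carrier G" and h: "h \<in> carrier G" for g h
  proof -
    have gh: "g \<otimes>\<^bsub>G\<^esub> h \<in> carrier G" using g h by simp
    have "inv\<^bsub>P\<^esub> (i (g \<otimes>\<^bsub>G\<^esub> h)) \<otimes>\<^bsub>P\<^esub> (i g \<otimes>\<^bsub>P\<^esub> i h)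
        = (inv\<^bsub>G\<^esub> (g \<otimes>\<^bsub>G\<^esub> h) \<otimes>\<^bsub>G\<^esub> (g \<otimes>\<^bsub>G\<^esub> h), inv\<^bsub>Sy\<^esub> \<sigma> \<otimes>\<^bsub>Sy\<^esub> (\<sigma> \<otimes>\<^bsub>Sy\<^esub> \<sigma>))"
      unfolding i_def using invP[OF gh sigC] multP by simp
    also have "\<dots> = (\<one>\<^bsub>G\<^esub>, \<sigma>)" using gh sigC by (simp add: Sy.m_assoc[symmetric])
    finally have e: "inv\<^bsub>P\<^esub> (i (g \<otimes>\<^bsub>G\<^esub> h)) \<otimes>\<^bsub>P\<^esub> (i g \<otimes>\<^bsub>P\<^esub> i h) = (\<one>\<^bsub>G\<^esub>, \<sigma>)" .
    show ?thesis unfolding word_dist_def e using WP[OF G.one_closed hsig] lsig wl_one[of G S] by simp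
  qed
  have p3: "i g \<noteq> \<one>\<^bsub>P\<^esub> \<and> curvature P T (i g) < 0" if g: "g \<in> carrier G" for g
  proof
    show "i g \<noteq> \<one>\<^bsub>P\<^esub>" unfolding i_def oneP using sig1 by simp
    define L where "L = word_length G S g"
    have lx: "word_length P T (i g) = L + 1" unfolding i_def L_def using WP[OF g hsig] lsig by simp
    define c where "c = (\<lambda>a. real (word_length P T (inv\<^bsub>P\<^esub> a \<otimes>\<^bsub>P\<^esub> i g \<otimes>\<^bsub>P\<^esub> a)))"
    define A where "A = (\<lambda>j. Transposition.transpose j (j + 1)) ` {1..<n}"
    have AS: "A \<subseteq> S_neg n" unfolding A_def S_neg_alt by blast
    have cardA: "card A = n - 1" unfolding A_def by (rule card_transp)
    have cS: "c (s, \<one>\<^bsub>Sy\<^esub>) \<ge> real L - 1" if s: "s \<in> S" for s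
    proof -
      have sc: "s \<in> carrier G" using s SG by blast
      have "inv\<^bsub>P\<^esub> (s, \<one>\<^bsub>Sy\<^esub>) \<otimes>\<^bsub>P\<^esub> i g \<otimes>\<^bsub>P\<^esub> (s, \<one>\<^bsub>Sy\<^esub>)
          = (inv\<^bsub>G\<^esub> s \<otimes>\<^bsub>G\<^esub> g \<otimes>\<^bsub>G\<^esub> s, inv\<^bsub>Sy\<^esub> \<one>\<^bsub>Sy\<^esub> \<otimes>\<^bsub>Sy\<^esub> \<sigma> \<otimes>\<^bsub>Sy\<^esub> \<one>\<^bsub>Sy\<^esub>)"
        unfolding i_def using invP[OF sc Sy.one_closed] multP by simp
      also have "\<dots> = (inv\<^bsub>G\<^esub> s \<otimes>\<^bsub>G\<^esub> g \<otimes>\<^bsub>G\<^esub> s, \<sigma>)" using sigC by simp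
      finally have e: "inv\<^bsub>P\<^esub> (s, \<one>\<^bsub>Sy\<^esub>) \<otimes>\<^bsub>P\<^esub> i g \<otimes>\<^bsub>P\<^esub> (s, \<one>\<^bsub>Sy\<^esub>) = (inv\<^bsub>G\<^esub> s \<otimes>\<^bsub>G\<^esub> g \<otimes>\<^bsub>G\<^esub> s, \<sigma>)" .
      have cc: "inv\<^bsub>G\<^esub> s \<otimes>\<^bsub>G\<^esub> g \<otimes>\<^bsub>G\<^esub> s \<in> carrier G" using sc g by simp
      have "L \<le> word_length G S (inv\<^bsub>G\<^esub> s \<otimes>\<^bsub>G\<^esub> g \<otimes>\<^bsub>G\<^esub> s) + 2"
        unfolding L_def by (rule wl_conj[OF assms(1) SG s Sinv[OF s] g hG[OF cc]])
      thus ?thesis unfolding c_def e using WP[OF cc hsig] lsig by simp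
    qed
    have cT: "c (\<one>\<^bsub>G\<^esub>, t) \<ge> real L + 1 + (if t \<in> A then 1 else 0)" if t: "t \<in> S_neg n" for t
    proof -
      have tc: "t \<in> carrier Sy" using t SnC by blast
      have "inv\<^bsub>P\<^esub> (\<one>\<^bsub>G\<^esub>, t) \<otimes>\<^bsub>P\<^esub> i g \<otimes>\<^bsub>P\<^esub> (\<one>\<^bsub>G\<^esub>, t)
          = (inv\<^bsub>G\<^esub> \<one>\<^bsub>G\<^esub> \<otimes>\<^bsub>G\<^esub> g \<otimes>\<^bsub>G\<^esub> \<one>\<^bsub>G\<^esub>, inv\<^bsub>Sy\<^esub> t \<otimes>\<^bsub>Sy\<^esub> \<sigma> \<otimes>\<^bsub>Sy\<^esub> t)"
        unfolding i_def using invP[OF G.one_closed tc] multP by simp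
      also have "\<dots> = (g, inv\<^bsub>Sy\<^esub> t \<otimes>\<^bsub>Sy\<^esub> \<sigma> \<otimes>\<^bsub>Sy\<^esub> t)" using g by simp
      finally have e: "inv\<^bsub>P\<^esub> (\<one>\<^bsub>G\<^esub>, t) \<otimes>\<^bsub>P\<^esub> i g \<otimes>\<^bsub>P\<^esub> (\<one>\<^bsub>G\<^esub>, t) = (g, inv\<^bsub>Sy\<^esub> t \<otimes>\<^bsub>Sy\<^esub> \<sigma> \<otimes>\<^bsub>Sy\<^esub> t)" .
      have it: "inv\<^bsub>Sy\<^esub> t \<in> S_neg n" using t unfolding Sy_def by (rule S_neg_inv)
      have hc: "hasw Sy (S_neg n) (inv\<^bsub>Sy\<^esub> t \<otimes>\<^bsub>Sy\<^esub> \<sigma> \<otimes>\<^bsub>Sy\<^esub> t)"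
        by (rule hasw_conj[OF mSy SnC it sigS t])
      have ne: "inv\<^bsub>Sy\<^esub> t \<otimes>\<^bsub>Sy\<^esub> \<sigma> \<otimes>\<^bsub>Sy\<^esub> t \<noteq> \<one>\<^bsub>Sy\<^esub>" by (rule grp_conj_ne[OF gSy tc sigC sig1])
      have l1: "1 \<le> word_length Sy (S_neg n) (inv\<^bsub>Sy\<^esub> t \<otimes>\<^bsub>Sy\<^esub> \<sigma> \<otimes>\<^bsub>Sy\<^esub> t)" by (rule wl_pos[OF hc ne])
      have l2: "2 \<le> word_length Sy (S_neg n) (inv\<^bsub>Sy\<^esub> t \<otimes>\<^bsub>Sy\<^esub> \<sigma> \<otimes>\<^bsub>Sy\<^esub> t)" if tA: "t \<in> A"
      proof -
        obtain j where j: "j \<in> {1..<n}" "t = Transposition.transpose j (j + 1)" using tA unfolding A_def by blast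
        have "inv\<^bsub>Sy\<^esub> t = t" using tc unfolding Sy_def j(2) by (simp add: inv_transp)
        hence "inv\<^bsub>Sy\<^esub> t \<otimes>\<^bsub>Sy\<^esub> \<sigma> \<otimes>\<^bsub>Sy\<^esub> t = Transposition.transpose j (j + 1) \<circ> ncycle n \<circ> Transposition.transpose j (j + 1)"
          unfolding Sy_def \<sigma>_def j(2) by (simp add: sym_group_mult)
        moreover have "Transposition.transpose j (j + 1) \<circ> ncycle n \<circ> Transposition.transpose j (j + 1) \<notin> S_neg n"
          using j(1) n4 by (intro key_conj) auto
        ultimately have "inv\<^bsub>Sy\<^esub> t \<otimes>\<^bsub>Sy\<^esub> \<sigma> \<otimes>\<^bsub>Sy\<^esub> t \<notin> S_neg n" by simp
        thus ?thesis by (rule wl_ge2[OF mSy SnC hc ne])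
      qed
      have "c (\<one>\<^bsub>G\<^esub>, t) = real L + real (word_length Sy (S_neg n) (inv\<^bsub>Sy\<^esub> t \<otimes>\<^bsub>Sy\<^esub> \<sigma> \<otimes>\<^bsub>Sy\<^esub> t))"
        unfolding c_def e L_def using WP[OF g hc] by simp
      thus ?thesis using l1 l2 by (cases "t \<in> A") auto
    qed
    define m where "m = card S"
    define k where "k = card (S_neg n)"
    have finSn: "finite (S_neg n)" by (rule finite_S_neg)
    have sumT: "sum c T = (\<Sum>s\<in>S. c (s, \<one>\<^bsub>Sy\<^esub>)) + (\<Sum>t\<in>S_neg n. c (\<one>\<^bsub>G\<^esub>, t))"
      unfolding T_def by (rule sum_split_gen(1)[OF finS finSn oneS])
    have cardT: "card T = m + k" unfolding T_def m_def k_def by (rule sum_split_gen(2)[OF finS finSn oneS])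
    have s1: "(\<Sum>s\<in>S. c (s, \<one>\<^bsub>Sy\<^esub>)) \<ge> real m * (real L - 1)"
      using sum_mono[of S "\<lambda>_. real L - 1" "\<lambda>s. c (s, \<one>\<^bsub>Sy\<^esub>)"] cS unfolding m_def by simp
    have "(\<Sum>t\<in>S_neg n. c (\<one>\<^bsub>G\<^esub>, t)) \<ge> (\<Sum>t\<in>S_neg n. real L + 1 + (if t \<in> A then 1 else 0))"
      by (rule sum_mono) (rule cT)
    also have "(\<Sum>t\<in>S_neg n. real L + 1 + (if t \<in> A then 1 else 0)) = real k * (real L + 1) + real (card A)"
    proof -
      have "(\<Sum>t\<in>S_neg n. (if t \<in> A then 1 else 0 :: real)) = real (card (S_neg n \<inter> A))"
        using finSn by (simp add: sum.If_cases)
      also have "S_neg n \<inter> A = A" using AS by blast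
      finally show ?thesis unfolding k_def by (simp add: sum.distrib)
    qed
    finally have s2: "(\<Sum>t\<in>S_neg n. c (\<one>\<^bsub>G\<^esub>, t)) \<ge> real k * (real L + 1) + real (card A)" .
    have kpos: "k > 0" unfolding k_def using finSn sigS card_gt_0_iff by blast
    have An: "real (card A) > 2 * real m" unfolding cardA m_def using nN by linarith
    have "sum c T > real (m + k) * (real L + 1)"
      using s1 s2 An unfolding sumT by (simp add: algebra_simps)
    hence av: "word_avg P T (i g) > real L + 1"
      unfolding word_avg_def c_def[symmetric] cardT using kpos by (simp add: pos_less_divide_eq mult.commute)
    show "curvature P T (i g) < 0"
      unfolding curvature_def lx using av by (simp add: divide_neg_pos)
  qed
  show "let P = G \<times>\<times> sym_group n; T = split_gen G (sym_group n) S (S_neg n) in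
     \<exists>i. i ` carrier G \<subseteq> carrier P
       \<and> (\<forall>g\<in>carrier G. \<forall>h\<in>carrier G. word_dist P T (i g) (i h) = word_dist G S g h)
       \<and> (\<forall>g\<in>carrier G. i g \<noteq> \<one>\<^bsub>P\<^esub> \<and> curvature P T (i g) < 0)
       \<and> (\<forall>g\<in>carrier G. \<forall>h\<in>carrier G.
            word_dist P T (i (g \<otimes>\<^bsub>G\<^esub> h)) (i g \<otimes>\<^bsub>P\<^esub> i h) \<le> 1)"
    unfolding Let_def P_def[symmetric] Sy_def[symmetric] T_def[symmetric]
    using p1 p2 p3 p4 by blast
qed

end
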